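(* Let $\mathbf{X}=(X_n)_{n\ge0}$ be a second-order stationary process whose covariance satisfies $|\sigma_X(h)|\le c\,h^{-\alpha}$ for all $h\ge1$, for some $c>0$ and $0<\alpha<1$. Let $(T_n)_{n\ge0}$ be a random walk independent of $\mathbf{X}$ with $T_0=0$ and i.i.d. increments with law $S$ on $\{1,2,\dots\}$, and let $Y_n=X_{T_n}$ with covariance $\sigma_Y$. If for some $\beta\in(0,1)$ $$\liminf_{x\to\infty}x^{\beta}P(T_1>x)>0,$$ then there is a constant $C$ such that $|\sigma_Y(h)|\le C\,h^{-\alpha/\beta}$ for all $h\ge1$. *)

theory Defs
  imports "HOL-Probability.Probability"
begin

definition cov :: "'a measure \<Rightarrow> ('a \<Rightarrow> real) \<Rightarrow> ('a \<Rightarrow> real) \<Rightarrow> real" where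
  "cov M U V = (\<integral>\<omega>. (U \<omega> - (\<integral>\<omega>'. U \<omega>' \<partial>M)) * (V \<omega> - (\<integral>\<omega>'. V \<omega>' \<partial>M)) \<partial>M)"

end

theory Submission
  imports Defs
begin

lemma indep_transfer:
  fixes G :: "('b \<times> 'b) \<Rightarrow> real"
  assumes P: "prob_space M"
    and ind: "prob_space.indep_var M SX Xv SZ Zv"
    and G: "G \<in> borel_measurable (SX \<Otimes>\<^sub>M SZ)"
    and bnd: "\<And>z. z \<in> space SZ \<Longrightarrow> (\<integral>\<^sup>+x. ennreal (norm (G (x,z))) \<partial>(distr M SX Xv)) \<le> ennreal K"
  shows "integrable M (\<lambda>\<omega>. G (Xv \<omega>, Zv \<omega>))"
    and "(\<integral>\<omega>. G (Xv \<omega>, Zv \<omega>) \<partial>M) = (\<integral>z. (\<integral>x. G (x,z) \<partial>(distr M SX Xv)) \<partial>(distr M SZ Zv))"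
proof -
  interpret prob_space M by fact
  have rv: "Xv \<in> measurable M SX" "Zv \<in> measurable M SZ"
    and eq: "distr M SX Xv \<Otimes>\<^sub>M distr M SZ Zv = distr M (SX \<Otimes>\<^sub>M SZ) (\<lambda>x. (Xv x, Zv x))"
    using ind unfolding indep_var_distribution_eq by auto
  interpret PX: prob_space "distr M SX Xv" by (rule prob_space_distr) (rule rv)
  interpret PZ: prob_space "distr M SZ Zv" by (rule prob_space_distr) (rule rv)
  interpret XZ: pair_prob_space "distr M SX Xv" "distr M SZ Zv" by unfold_locales
  have sets_eq: "sets (distr M SX Xv \<Otimes>\<^sub>M distr M SZ Zv) = sets (SX \<Otimes>\<^sub>M SZ)"
    by (intro sets_pair_measure_cong) auto
  have Gm: "G \<in> borel_measurable (distr M SX Xv \<Otimes>\<^sub>M distr M SZ Zv)"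
    using G by (subst measurable_cong_sets[OF sets_eq refl])
  have "(\<integral>\<^sup>+x. ennreal (norm (G x)) \<partial>(distr M SX Xv \<Otimes>\<^sub>M distr M SZ Zv))
      = (\<integral>\<^sup>+z. (\<integral>\<^sup>+x. ennreal (norm (G (x,z))) \<partial>(distr M SX Xv)) \<partial>(distr M SZ Zv))"
    by (rule XZ.nn_integral_snd[symmetric]) (use Gm in measurable)
  also have "\<dots> \<le> (\<integral>\<^sup>+z. ennreal K \<partial>(distr M SZ Zv))"
    by (intro nn_integral_mono) (use bnd in auto)
  also have "\<dots> < \<infinity>" using PZ.emeasure_space_1 by simp
  finally have int: "integrable (distr M SX Xv \<Otimes>\<^sub>M distr M SZ Zv) G"
    using Gm by (simp add: integrable_iff_bounded)
  have G2: "G \<in> borel_measurable (SX \<Otimes>\<^sub>M SZ)" by fact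
  have rvp: "(\<lambda>x. (Xv x, Zv x)) \<in> measurable M (SX \<Otimes>\<^sub>M SZ)" using rv by measurable
  show "integrable M (\<lambda>\<omega>. G (Xv \<omega>, Zv \<omega>))"
    using int unfolding eq by (subst (asm) integrable_distr_eq[OF rvp G2])
  have "(\<integral>\<omega>. G (Xv \<omega>, Zv \<omega>) \<partial>M) = integral\<^sup>L (distr M (SX \<Otimes>\<^sub>M SZ) (\<lambda>x. (Xv x, Zv x))) G"
    by (rule integral_distr[OF rvp G2, symmetric])
  also have "\<dots> = integral\<^sup>L (distr M SX Xv \<Otimes>\<^sub>M distr M SZ Zv) (case_prod (\<lambda>x z. G (x,z)))"
    unfolding eq by simp
  also have "\<dots> = (\<integral>z. (\<integral>x. G (x,z) \<partial>(distr M SX Xv)) \<partial>(distr M SZ Zv))"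
    by (rule XZ.integral_snd[symmetric]) (use int in simp)
  finally show "(\<integral>\<omega>. G (Xv \<omega>, Zv \<omega>) \<partial>M) = (\<integral>z. (\<integral>x. G (x,z) \<partial>(distr M SX Xv)) \<partial>(distr M SZ Zv))" .
qed

lemma abs_mult_le_sq: "\<bar>(u::real) * v\<bar> \<le> u\<^sup>2 + v\<^sup>2"
proof -
  have "2 * \<bar>u\<bar> * \<bar>v\<bar> \<le> \<bar>u\<bar>\<^sup>2 + \<bar>v\<bar>\<^sup>2" using sum_squares_bound[of "\<bar>u\<bar>" "\<bar>v\<bar>"] by simp
  moreover have "0 \<le> \<bar>u\<bar> * \<bar>v\<bar>" "\<bar>u\<bar>\<^sup>2 = u\<^sup>2" "\<bar>v\<bar>\<^sup>2 = v\<^sup>2" by simp_all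
  ultimately show ?thesis unfolding abs_mult by linarith
qed

lemma abs_le_sq: "\<bar>(u::real)\<bar> \<le> 1 + u\<^sup>2"
proof (cases "\<bar>u\<bar> \<le> 1")
  case True then show ?thesis by (smt (verit) zero_le_power2)
next
  case False
  then have "\<bar>u\<bar> * 1 \<le> \<bar>u\<bar> * \<bar>u\<bar>" by (intro mult_left_mono) auto
  then show ?thesis by (simp add: power2_eq_square abs_mult_self_eq)
qed

lemma X_facts:
  fixes M :: "'a measure" and X :: "nat \<Rightarrow> 'a \<Rightarrow> real"
  assumes P: "prob_space M"
    and X_meas: "\<And>n. X n \<in> borel_measurable M"
    and X_L2: "\<And>n. integrable M (\<lambda>\<omega>. (X n \<omega>)\<^sup>2)"
    and X_mean: "\<And>n. (\<integral>\<omega>. X n \<omega> \<partial>M) = \<mu>"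
    and X_cov: "\<And>m h. cov M (X m) (X (m + h)) = \<sigma>X h"
  shows "integrable M (X a)"
    and "integrable M (\<lambda>\<omega>. (X a \<omega> - \<mu>)\<^sup>2)"
    and "(\<integral>\<omega>. (X a \<omega> - \<mu>)\<^sup>2 \<partial>M) = \<sigma>X 0"
    and "integrable M (\<lambda>\<omega>. (X a \<omega> - \<mu>) * (X b \<omega> - \<mu>))"
    and "(\<integral>\<omega>. (X a \<omega> - \<mu>) * (X b \<omega> - \<mu>) \<partial>M) = cov M (X a) (X b)"
    and "(\<integral>\<omega>. \<bar>X a \<omega>\<bar> \<partial>M) \<le> 1 + \<bar>\<mu>\<bar> + \<sigma>X 0"
    and "(\<integral>\<omega>. \<bar>(X a \<omega> - \<mu>) * (X b \<omega> - \<mu>)\<bar> \<partial>M) \<le> 2 * \<sigma>X 0"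
proof -
  interpret prob_space M by fact
  have int: "integrable M (X i)" for i
    by (rule square_integrable_imp_integrable[OF X_meas X_L2])
  show "integrable M (X a)" by (rule int)
  have sq: "integrable M (\<lambda>\<omega>. (X i \<omega> - \<mu>)\<^sup>2)" for i
  proof -
    have "(\<lambda>\<omega>. (X i \<omega> - \<mu>)\<^sup>2) = (\<lambda>\<omega>. (X i \<omega>)\<^sup>2 - 2 * \<mu> * X i \<omega> + \<mu>\<^sup>2)"
      by (auto simp: power2_diff algebra_simps)
    then show ?thesis using int[of i] X_L2[of i] by simp
  qed
  show "integrable M (\<lambda>\<omega>. (X a \<omega> - \<mu>)\<^sup>2)" by (rule sq)
  have sqv: "(\<integral>\<omega>. (X i \<omega> - \<mu>)\<^sup>2 \<partial>M) = \<sigma>X 0" for i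
    using X_cov[of i 0] by (simp add: cov_def X_mean power2_eq_square)
  show "(\<integral>\<omega>. (X a \<omega> - \<mu>)\<^sup>2 \<partial>M) = \<sigma>X 0" by (rule sqv)
  have ssum: "integrable M (\<lambda>\<omega>. (X a \<omega> - \<mu>)\<^sup>2 + (X b \<omega> - \<mu>)\<^sup>2)"
    using sq by auto
  have pint: "integrable M (\<lambda>\<omega>. (X a \<omega> - \<mu>) * (X b \<omega> - \<mu>))"
    by (rule Bochner_Integration.integrable_bound[OF ssum]) (use abs_mult_le_sq X_meas in auto)
  show "integrable M (\<lambda>\<omega>. (X a \<omega> - \<mu>) * (X b \<omega> - \<mu>))" by (rule pint)
  show "(\<integral>\<omega>. (X a \<omega> - \<mu>) * (X b \<omega> - \<mu>) \<partial>M) = cov M (X a) (X b)"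
    by (simp add: cov_def X_mean)
  have "(\<integral>\<omega>. \<bar>X a \<omega>\<bar> \<partial>M) \<le> (\<integral>\<omega>. \<bar>\<mu>\<bar> + (1 + (X a \<omega> - \<mu>)\<^sup>2) \<partial>M)"
  proof (rule integral_mono)
    show "integrable M (\<lambda>\<omega>. \<bar>X a \<omega>\<bar>)" using int by auto
    show "integrable M (\<lambda>\<omega>. \<bar>\<mu>\<bar> + (1 + (X a \<omega> - \<mu>)\<^sup>2))" using sq by auto
    show "\<bar>X a \<omega>\<bar> \<le> \<bar>\<mu>\<bar> + (1 + (X a \<omega> - \<mu>)\<^sup>2)" for \<omega>
      using abs_le_sq[of "X a \<omega> - \<mu>"] by linarith
  qed
  also have "\<dots> = 1 + \<bar>\<mu>\<bar> + \<sigma>X 0"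
    using sq[of a] sqv[of a] prob_space by (simp add: integral_add)
  finally show "(\<integral>\<omega>. \<bar>X a \<omega>\<bar> \<partial>M) \<le> 1 + \<bar>\<mu>\<bar> + \<sigma>X 0" .
  have "(\<integral>\<omega>. \<bar>(X a \<omega> - \<mu>) * (X b \<omega> - \<mu>)\<bar> \<partial>M) \<le> (\<integral>\<omega>. (X a \<omega> - \<mu>)\<^sup>2 + (X b \<omega> - \<mu>)\<^sup>2 \<partial>M)"
    by (rule integral_mono) (use pint sq abs_mult_le_sq in auto)
  also have "\<dots> = 2 * \<sigma>X 0" using sq sqv by (simp add: integral_add)
  finally show "(\<integral>\<omega>. \<bar>(X a \<omega> - \<mu>) * (X b \<omega> - \<mu>)\<bar> \<partial>M) \<le> 2 * \<sigma>X 0" .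
qed


lemma dyadic_pointwise:
  fixes a d \<alpha> :: real
  assumes a: "a > 0" and d: "d > 0" and \<alpha>: "\<alpha> > 0" and K: "d > a / 2^K"
  shows "d powr (-\<alpha>) \<le> a powr (-\<alpha>) + (\<Sum>k<K. (a / 2^(k+1)) powr (-\<alpha>) * (if d \<le> a/2^k then 1 else 0))"
  using K
proof (induction K)
  case 0
  then show ?case using d \<alpha> a by (simp add: powr_mono2')
next
  case (Suc K)
  have nn: "0 \<le> (\<Sum>k<K. (a / 2^(k+1)) powr (-\<alpha>) * (if d \<le> a/2^k then 1 else (0::real)))"
    by (intro sum_nonneg) auto
  show ?case
  proof (cases "d > a / 2^K")
    case True
    then show ?thesis using Suc.IH by simp
  next
    case False
    then have "d \<le> a / 2^K" by simp
    have "d powr (-\<alpha>) \<le> (a / 2^(K+1)) powr (-\<alpha>)"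
      using Suc.prems \<alpha> a by (intro powr_mono2') auto
    have "(\<Sum>k<Suc K. (a / 2^(k+1)) powr (-\<alpha>) * (if d \<le> a/2^k then 1 else (0::real)))
        = (\<Sum>k<K. (a / 2^(k+1)) powr (-\<alpha>) * (if d \<le> a/2^k then 1 else (0::real))) + (a / 2^(K+1)) powr (-\<alpha>)"
      using \<open>d \<le> a / 2^K\<close> by simp
    then show ?thesis using nn powr_ge_zero[of a "-\<alpha>"] \<open>d powr (-\<alpha>) \<le> (a / 2^(K+1)) powr (-\<alpha>)\<close> by linarith
  qed
qed

lemma exp_neg_bound:
  fixes y :: real assumes "y > 0" "m > 0"
  shows "exp (-y) \<le> (real m / y) ^ m"
proof -
  have "y / real m < exp (y / real m)" using exp_gt_zero
    by (smt (verit) exp_ge_add_one_self)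
  then have "(y / real m) ^ m \<le> exp (y / real m) ^ m"
    using assms by (intro power_mono) auto
  also have "\<dots> = exp y" using assms by (simp flip: exp_of_nat_mult)
  finally have 1: "(y / real m) ^ m \<le> exp y" .
  have 2: "0 < (y / real m) ^ m" using assms by simp
  have "exp (-y) = 1 / exp y" by (simp add: exp_minus field_simps)
  also have "\<dots> \<le> 1 / (y / real m) ^ m" using 1 2 by (intro divide_left_mono) auto
  also have "\<dots> = (real m / y) ^ m" by (simp add: power_divide)
  finally show ?thesis .
qed

lemma sum_bound:
  fixes \<kappa> \<alpha> \<beta> :: real assumes \<kappa>: "\<kappa> > 0" and \<alpha>: "\<alpha> > 0" and \<beta>: "\<beta> > 0"
  shows "\<exists>B. \<forall>K. (\<Sum>k<K. 2 powr ((real k + 1) * \<alpha>) * exp (-(\<kappa> * 2 powr (real k * \<beta>)))) \<le> B"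
proof -
  define m where "m = nat \<lceil>(\<alpha> + 1) / \<beta>\<rceil> + 1"
  have m: "m > 0" "real m * \<beta> \<ge> \<alpha> + 1"
  proof -
    show "m > 0" by (simp add: m_def)
    have "(\<alpha> + 1) / \<beta> \<le> real m" unfolding m_def by linarith
    then show "real m * \<beta> \<ge> \<alpha> + 1" using \<beta> by (simp add: field_simps)
  qed
  define A where "A = 2 powr \<alpha> * (real m / \<kappa>) ^ m"
  have tm: "2 powr ((real k + 1) * \<alpha>) * exp (-(\<kappa> * 2 powr (real k * \<beta>))) \<le> A * (1/2) ^ k" for k
  proof -
    have "exp (-(\<kappa> * 2 powr (real k * \<beta>))) \<le> (real m / (\<kappa> * 2 powr (real k * \<beta>))) ^ m"
      using \<kappa> m by (intro exp_neg_bound) auto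
    also have "\<dots> = (real m / \<kappa>) ^ m / 2 powr (real k * \<beta> * real m)"
      by (simp add: power_divide power_mult_distrib powr_realpow[symmetric] powr_powr mult_ac flip: powr_power)
    finally have e: "exp (-(\<kappa> * 2 powr (real k * \<beta>))) \<le> (real m / \<kappa>) ^ m / 2 powr (real k * \<beta> * real m)" .
    have "2 powr ((real k + 1) * \<alpha>) * exp (-(\<kappa> * 2 powr (real k * \<beta>)))
        \<le> 2 powr ((real k + 1) * \<alpha>) * ((real m / \<kappa>) ^ m / 2 powr (real k * \<beta> * real m))"
      by (intro mult_left_mono e) auto
    also have "\<dots> = A * 2 powr (real k * (\<alpha> - \<beta> * real m))"
    proof -
      have "2 powr ((real k + 1) * \<alpha>) / 2 powr (real k * \<beta> * real m) = 2 powr \<alpha> * 2 powr (real k * (\<alpha> - \<beta> * real m))"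
        by (simp add: powr_diff[symmetric] powr_add[symmetric] algebra_simps)
      then show ?thesis unfolding A_def by (simp add: mult_ac times_divide_eq_right[symmetric])
    qed
    also have "\<dots> \<le> A * 2 powr (- real k)"
    proof -
      have "real k * (\<alpha> - \<beta> * real m) \<le> real k * (-1)"
        using m by (intro mult_left_mono) (auto simp: algebra_simps)
      then show ?thesis using \<kappa> unfolding A_def by (intro mult_left_mono powr_mono) auto
    qed
    also have "\<dots> = A * (1/2) ^ k"
      by (simp add: powr_minus powr_realpow power_one_over field_simps)
    finally show ?thesis .
  qed
  have "(\<Sum>k<K. 2 powr ((real k + 1) * \<alpha>) * exp (-(\<kappa> * 2 powr (real k * \<beta>)))) \<le> 2 * A" for K
  proof -
    have "(\<Sum>k<K. 2 powr ((real k + 1) * \<alpha>) * exp (-(\<kappa> * 2 powr (real k * \<beta>)))) \<le> (\<Sum>k<K. A * (1/2) ^ k)"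
      by (intro sum_mono tm)
    also have "\<dots> = A * (2 - 2 * (1/2)^K)"
      by (simp add: sum_distrib_left[symmetric] sum_gp_strict)
    also have "\<dots> \<le> 2 * A" using \<kappa> unfolding A_def by (simp add: algebra_simps)
    finally show ?thesis .
  qed
  then show ?thesis by blast
qed

lemma powr_div_neg: "(x::real) > 0 \<Longrightarrow> y > 0 \<Longrightarrow> (x/y) powr (-z) = x powr (-z) * y powr z"
  by (simp add: powr_divide powr_minus divide_simps)

lemma two_pow_powr: "((2::real)^k) powr z = 2 powr (real k * z)"
proof -
  have "(2::real)^k = 2 powr (real k)" by (simp add: powr_realpow)
  then show ?thesis by (simp add: powr_powr)
qed

lemma pow_ident:
  fixes h a \<alpha> \<beta> \<kappa> :: real
  assumes h: "h \<ge> 1" and \<beta>: "\<beta> > 0" and a: "a = h powr (1/\<beta>)"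
  shows "(a / 2^(k+1)) powr (-\<alpha>) = h powr (-\<alpha>/\<beta>) * 2 powr ((real k + 1) * \<alpha>)"
    and "h * \<kappa> * (a / 2^k) powr (-\<beta>) = \<kappa> * 2 powr (real k * \<beta>)"
    and "a powr (-\<alpha>) = h powr (-\<alpha>/\<beta>)"
proof -
  have apos: "a > 0" using a h by simp
  show a1: "a powr (-\<alpha>) = h powr (-\<alpha>/\<beta>)" using a h by (simp add: powr_powr)
  show "(a / 2^(k+1)) powr (-\<alpha>) = h powr (-\<alpha>/\<beta>) * 2 powr ((real k + 1) * \<alpha>)"
  proof -
    have e1: "(a / 2^(k+1)) powr (-\<alpha>) = a powr (-\<alpha>) * ((2::real)^(k+1)) powr \<alpha>"
      using apos by (intro powr_div_neg) auto
    have e2: "((2::real)^(k+1)) powr \<alpha> = 2 powr ((real k + 1) * \<alpha>)"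
      using two_pow_powr[of "k+1" \<alpha>] by (simp add: add.commute)
    show ?thesis unfolding e1 e2 a1 ..
  qed
  have "a powr (-\<beta>) = 1 / h" using a h \<beta> by (simp add: powr_powr powr_minus_divide)
  then show "h * \<kappa> * (a / 2^k) powr (-\<beta>) = \<kappa> * 2 powr (real k * \<beta>)"
    using h apos by (simp add: powr_div_neg two_pow_powr)
qed


lemma powr_neg_le1: "1 \<le> (x::real) \<Longrightarrow> 0 \<le> b \<Longrightarrow> x powr (-b) \<le> 1"
  using ge_one_powr_ge_zero[of x b] by (simp add: powr_minus inverse_le_1_iff)

lemma walk_bound:
  fixes M :: "'a measure" and \<xi> :: "nat \<Rightarrow> 'a \<Rightarrow> nat" and S :: "nat pmf" and \<alpha> \<beta> :: real
  assumes P: "prob_space M"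
    and S_pos: "0 \<notin> set_pmf S"
    and \<xi>_iid: "prob_space.indep_vars M (\<lambda>_. count_space UNIV) \<xi> UNIV"
    and \<xi>_law: "\<And>i. distr M (count_space UNIV) (\<xi> i) = measure_pmf S"
    and \<alpha>: "0 < \<alpha>" and \<beta>: "0 < \<beta>"
    and tail: "Liminf at_top (\<lambda>x::real. ereal (x powr \<beta> * measure M {\<omega>\<in>space M. real (\<xi> 0 \<omega>) > x})) > 0"
  shows "\<exists>B. \<forall>n h. h \<ge> 1 \<longrightarrow> (\<integral>\<omega>. real (\<Sum>i\<in>{n..<n+h}. \<xi> i \<omega>) powr (-\<alpha>) \<partial>M) \<le> B * real h powr (-\<alpha>/\<beta>)"
proof -
  interpret prob_space M by fact
  have rv[measurable]: "\<And>i. \<xi> i \<in> measurable M (count_space UNIV)"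
    using \<xi>_iid unfolding indep_vars_def2 by auto
  have ind_sets: "indep_sets (\<lambda>i. {\<xi> i -` A \<inter> space M | A. A \<in> sets (count_space UNIV)}) UNIV"
    using \<xi>_iid unfolding indep_vars_def2 by auto
  have law: "prob (\<xi> i -` A \<inter> space M) = measure_pmf.prob S A" for i A
  proof -
    have "measure (distr M (count_space UNIV) (\<xi> i)) A = prob (\<xi> i -` A \<inter> space M)"
      by (rule measure_distr) auto
    then show ?thesis using \<xi>_law by simp
  qed
  have AEpos: "AE \<omega> in M. \<forall>i. 1 \<le> \<xi> i \<omega>"
  proof (subst AE_all_countable, intro allI)
    fix i
    have "AE k in distr M (count_space UNIV) (\<xi> i). 1 \<le> k"
      unfolding \<xi>_law using S_pos by (auto simp: AE_measure_pmf_iff Suc_le_eq intro!: gr0I)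
    then show "AE \<omega> in M. 1 \<le> \<xi> i \<omega>"
      by (subst (asm) AE_distr_iff) auto
  qed
  define q where "q x = prob {\<omega>\<in>space M. x < real (\<xi> 0 \<omega>)}" for x :: real
  have pq: "prob {\<omega>\<in>space M. real (\<xi> i \<omega>) \<le> x} = 1 - q x" for i x
  proof -
    have e: "{k. real k \<le> x} = UNIV - {k::nat. x < real k}" by auto
    have "prob {\<omega>\<in>space M. real (\<xi> i \<omega>) \<le> x} = prob (\<xi> i -` {k. real k \<le> x} \<inter> space M)"
      by (rule arg_cong[where f=prob]) auto
    also have "\<dots> = measure_pmf.prob S {k. real k \<le> x}" by (rule law)
    also have "\<dots> = 1 - measure_pmf.prob S {k. x < real k}"
      unfolding e using measure_pmf.prob_compl[of "{k. x < real k}" S] by simp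
    also have "measure_pmf.prob S {k. x < real k} = q x"
      unfolding q_def law[of 0, symmetric] by (rule arg_cong[where f=prob]) auto
    finally show ?thesis .
  qed
  have q01: "0 \<le> q x" "q x \<le> 1" for x unfolding q_def by auto
  have Dbound: "prob {\<omega>\<in>space M. real (\<Sum>i\<in>{n..<n+h}. \<xi> i \<omega>) \<le> x} \<le> (1 - q x)^h"
    if h: "h \<ge> 1" for n h x
  proof -
    define A where "A i = \<xi> i -` {k. real k \<le> x} \<inter> space M" for i
    have sub: "{\<omega>\<in>space M. real (\<Sum>i\<in>{n..<n+h}. \<xi> i \<omega>) \<le> x} \<subseteq> (\<Inter>i\<in>{n..<n+h}. A i)"
    proof safe
      fix \<omega> i assume \<omega>: "\<omega> \<in> space M" "real (\<Sum>i\<in>{n..<n+h}. \<xi> i \<omega>) \<le> x" "i \<in> {n..<n+h}"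
      have "\<xi> i \<omega> \<le> (\<Sum>i\<in>{n..<n+h}. \<xi> i \<omega>)" by (rule member_le_sum) (use \<omega> in auto)
      then have "real (\<xi> i \<omega>) \<le> real (\<Sum>i\<in>{n..<n+h}. \<xi> i \<omega>)" by linarith
      then show "\<omega> \<in> A i" using \<omega> unfolding A_def by auto
    qed
    have Aev: "A i \<in> events" for i unfolding A_def by (rule measurable_sets[OF rv]) auto
    have ne: "{n..<n+h} \<noteq> {}" using h by auto
    have "prob {\<omega>\<in>space M. real (\<Sum>i\<in>{n..<n+h}. \<xi> i \<omega>) \<le> x} \<le> prob (\<Inter>i\<in>{n..<n+h}. A i)"
      by (rule finite_measure_mono[OF sub]) (use Aev ne in auto)
    also have "\<dots> = (\<Prod>i\<in>{n..<n+h}. prob (A i))"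
    proof (rule indep_setsD[OF ind_sets])
      show "\<forall>j\<in>{n..<n+h}. A j \<in> {\<xi> j -` A \<inter> space M | A. A \<in> sets (count_space UNIV)}"
      proof
        fix j show "A j \<in> {\<xi> j -` A \<inter> space M | A. A \<in> sets (count_space UNIV)}"
          unfolding A_def by (rule CollectI, rule exI[of _ "{k. real k \<le> x}"]) simp
      qed
    qed (use ne in auto)
    also have "\<dots> = (\<Prod>i\<in>{n..<n+h}. 1 - q x)"
    proof (rule prod.cong[OF refl])
      fix i show "prob (A i) = 1 - q x"
        unfolding A_def pq[of i x, symmetric] by (rule arg_cong[where f=prob]) auto
    qed
    also have "\<dots> = (1 - q x)^h" by simp
    finally show ?thesis .
  qed
  have "\<exists>\<kappa>>0. \<forall>x\<ge>1. \<kappa> * x powr (-\<beta>) \<le> q x"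
  proof -
    obtain y where y: "0 < ereal y" "ereal y < Liminf at_top (\<lambda>x::real. ereal (x powr \<beta> * q x))"
      using ereal_dense2[OF tail[folded q_def]] by blast
    have "eventually (\<lambda>x. ereal y < ereal (x powr \<beta> * q x)) at_top"
      by (rule less_LiminfD[OF y(2)])
    then obtain N where N: "\<And>x. x \<ge> N \<Longrightarrow> y < x powr \<beta> * q x"
      by (auto simp: eventually_at_top_linorder)
    define x0 where "x0 = max N 1"
    have x0: "x0 \<ge> 1" "x0 \<ge> N" unfolding x0_def by auto
    have ypos: "y > 0" using y by simp
    have x0b: "x0 powr (-\<beta>) \<le> 1" using x0 \<beta> by (intro powr_neg_le1) auto
    have key: "y * x powr (-\<beta>) < q x" if "x \<ge> N" "x \<ge> 1" for x
    proof -
      have "y < x powr \<beta> * q x" using N that by auto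
      then have "y * x powr (-\<beta>) < (x powr \<beta> * q x) * x powr (-\<beta>)"
        using that by (intro mult_strict_right_mono) auto
      also have "\<dots> = q x" using that by (simp add: powr_minus field_simps)
      finally show ?thesis .
    qed
    have "\<forall>x\<ge>1. (y * x0 powr (-\<beta>)) * x powr (-\<beta>) \<le> q x"
    proof (intro allI impI)
      fix x :: real assume x: "x \<ge> 1"
      have xb: "x powr (-\<beta>) \<le> 1" "0 \<le> x powr (-\<beta>)" using x \<beta> by (auto intro: powr_neg_le1)
      show "(y * x0 powr (-\<beta>)) * x powr (-\<beta>) \<le> q x"
      proof (cases "x \<ge> x0")
        case True
        then have "y * x powr (-\<beta>) < q x" using key x x0 by auto
        moreover have "(y * x0 powr (-\<beta>)) * x powr (-\<beta>) \<le> y * x powr (-\<beta>)"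
          using x0b xb ypos by (simp add: mult_left_le_one_le mult_le_cancel_right1)
        ultimately show ?thesis by linarith
      next
        case False
        have "q x0 \<le> q x" unfolding q_def using False
          by (intro finite_measure_mono) auto
        moreover have "y * x0 powr (-\<beta>) < q x0" using key x0 by auto
        moreover have "(y * x0 powr (-\<beta>)) * x powr (-\<beta>) \<le> y * x0 powr (-\<beta>)"
          using xb ypos by (intro mult_left_le) auto
        ultimately show ?thesis by linarith
      qed
    qed
    moreover have "y * x0 powr (-\<beta>) > 0" using ypos x0 by simp
    ultimately show ?thesis by blast
  qed
  then obtain \<kappa> where \<kappa>: "\<kappa> > 0" "\<And>x. x \<ge> 1 \<Longrightarrow> \<kappa> * x powr (-\<beta>) \<le> q x" by blast
  have Dexp: "prob {\<omega>\<in>space M. real (\<Sum>i\<in>{n..<n+h}. \<xi> i \<omega>) \<le> x} \<le> exp (-(real h * \<kappa> * x powr (-\<beta>)))"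
    if h: "h \<ge> 1" for n h x
  proof (cases "x \<ge> 1")
    case True
    have "(1 - q x)^h \<le> exp (- q x) ^ h"
      using q01[of x] exp_ge_add_one_self[of "- q x"] by (intro power_mono) auto
    also have "\<dots> = exp (- (real h * q x))" by (simp flip: exp_of_nat_mult)
    also have "\<dots> \<le> exp (-(real h * \<kappa> * x powr (-\<beta>)))"
      using \<kappa>(2)[OF True] by (simp add: mult.assoc mult_left_mono)
    finally show ?thesis using Dbound[OF h, of n x] by linarith
  next
    case False
    have "AE \<omega> in M. \<not> real (\<Sum>i\<in>{n..<n+h}. \<xi> i \<omega>) \<le> x"
      using AEpos
    proof eventually_elim
      case (elim \<omega>)
      have "\<xi> n \<omega> \<le> (\<Sum>i\<in>{n..<n+h}. \<xi> i \<omega>)" by (rule member_le_sum) (use h in auto)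
      with elim[rule_format, of n] have "1 \<le> (\<Sum>i\<in>{n..<n+h}. \<xi> i \<omega>)" by linarith
      then show ?case using False by linarith
    qed
    then have "prob {\<omega>\<in>space M. real (\<Sum>i\<in>{n..<n+h}. \<xi> i \<omega>) \<le> x} = 0"
      by (rule prob_eq_0_AE)
    then show ?thesis by simp
  qed
  obtain B0 where B0: "\<And>K. (\<Sum>k<K. 2 powr ((real k + 1) * \<alpha>) * exp (-(\<kappa> * 2 powr (real k * \<beta>)))) \<le> B0"
    using sum_bound[OF \<kappa>(1) \<alpha> \<beta>] by blast
  have "(\<integral>\<omega>. real (\<Sum>i\<in>{n..<n+h}. \<xi> i \<omega>) powr (-\<alpha>) \<partial>M) \<le> (1 + B0) * real h powr (-\<alpha>/\<beta>)"
    if h: "h \<ge> 1" for n h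
  proof -
    define D where "D \<omega> = real (\<Sum>i\<in>{n..<n+h}. \<xi> i \<omega>)" for \<omega>
    have Dm[measurable]: "D \<in> borel_measurable M" unfolding D_def by measurable
    define a where "a = real h powr (1/\<beta>)"
    have apos: "a > 0" using h by (simp add: a_def)
    obtain K where K: "a < 2^K" using real_arch_pow[of 2 a] by auto
    define E where "E k = {\<omega>\<in>space M. D \<omega> \<le> a / 2^k}" for k
    have Eev: "E k \<in> events" for k unfolding E_def by measurable
    define R where "R \<omega> = a powr (-\<alpha>) + (\<Sum>k<K. (a / 2^(k+1)) powr (-\<alpha>) * indicator (E k) \<omega>)" for \<omega>
    have Iint: "integrable M (indicator (E k) :: 'a \<Rightarrow> real)" for k
      by (intro integrable_real_indicator Eev) (simp add: emeasure_eq_measure)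
    have Sint: "integrable M (\<lambda>\<omega>. \<Sum>k<K. (a / 2^(k+1)) powr (-\<alpha>) * indicator (E k) \<omega>)"
      by (intro Bochner_Integration.integrable_sum integrable_mult_right Iint)
    have Rint: "integrable M R" unfolding R_def
      by (intro Bochner_Integration.integrable_add integrable_const Sint)
    have Lint: "integrable M (\<lambda>\<omega>. D \<omega> powr (-\<alpha>))"
    proof (rule integrable_const_bound[where B=1])
      show "AE \<omega> in M. norm (D \<omega> powr (-\<alpha>)) \<le> 1"
      proof (rule AE_I2)
        fix \<omega> show "norm (D \<omega> powr (-\<alpha>)) \<le> 1"
        proof (cases "D \<omega> = 0")
          case False
          define s where "s = (\<Sum>i\<in>{n..<n+h}. \<xi> i \<omega>)"
          have Ds: "D \<omega> = real s" unfolding D_def s_def ..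
          then have "s \<noteq> 0" using False by auto
          then have "1 \<le> D \<omega>" unfolding Ds by linarith
          then show ?thesis using \<alpha> powr_neg_le1[of "D \<omega>" \<alpha>] by simp
        qed simp
      qed
    qed measurable
    have "(\<integral>\<omega>. D \<omega> powr (-\<alpha>) \<partial>M) \<le> (\<integral>\<omega>. R \<omega> \<partial>M)"
    proof (rule integral_mono_AE[OF Lint Rint])
      show "AE \<omega> in M. D \<omega> powr (-\<alpha>) \<le> R \<omega>"
        using AEpos AE_space
      proof eventually_elim
        case (elim \<omega>)
        have "\<xi> n \<omega> \<le> (\<Sum>i\<in>{n..<n+h}. \<xi> i \<omega>)" by (rule member_le_sum) (use h in auto)
        with elim(1)[rule_format, of n] have D1: "1 \<le> D \<omega>" unfolding D_def by linarith
        have "a / 2^K < 1" using K by simp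
        then have DK: "a / 2^K < D \<omega>" "0 < D \<omega>" using D1 by linarith+
        have "D \<omega> powr (-\<alpha>) \<le> a powr (-\<alpha>) + (\<Sum>k<K. (a / 2^(k+1)) powr (-\<alpha>) * (if D \<omega> \<le> a/2^k then 1 else 0))"
          by (rule dyadic_pointwise[OF apos DK(2) \<alpha> DK(1)])
        also have "\<dots> = R \<omega>"
          unfolding R_def E_def using elim(2) by (intro arg_cong2[where f="(+)"] refl sum.cong) (simp_all add: indicator_def)
        finally show ?case .
      qed
    qed
    also have "(\<integral>\<omega>. R \<omega> \<partial>M) = a powr (-\<alpha>) + (\<Sum>k<K. (a / 2^(k+1)) powr (-\<alpha>) * prob (E k))"
    proof -
      have "(\<integral>\<omega>. R \<omega> \<partial>M) = (\<integral>\<omega>. a powr (-\<alpha>) \<partial>M) + (\<integral>\<omega>. (\<Sum>k<K. (a / 2^(k+1)) powr (-\<alpha>) * indicator (E k) \<omega>) \<partial>M)"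
        unfolding R_def by (rule Bochner_Integration.integral_add[OF integrable_const Sint])
      also have "(\<integral>\<omega>. (\<Sum>k<K. (a / 2^(k+1)) powr (-\<alpha>) * indicator (E k) \<omega>) \<partial>M)
          = (\<Sum>k<K. (\<integral>\<omega>. (a / 2^(k+1)) powr (-\<alpha>) * indicator (E k) \<omega> \<partial>M))"
        by (rule Bochner_Integration.integral_sum) (intro integrable_mult_right Iint)
      also have "\<dots> = (\<Sum>k<K. (a / 2^(k+1)) powr (-\<alpha>) * prob (E k))"
      proof (rule sum.cong[OF refl])
        fix k
        have "E k \<inter> space M = E k" unfolding E_def by auto
        then show "(\<integral>\<omega>. (a / 2^(k+1)) powr (-\<alpha>) * indicator (E k) \<omega> \<partial>M) = (a / 2^(k+1)) powr (-\<alpha>) * prob (E k)"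
          by simp
      qed
      finally show ?thesis by (simp add: prob_space)
    qed
    also have "\<dots> \<le> a powr (-\<alpha>) + (\<Sum>k<K. (a / 2^(k+1)) powr (-\<alpha>) * exp (-(real h * \<kappa> * (a/2^k) powr (-\<beta>))))"
      unfolding E_def D_def by (intro add_left_mono sum_mono mult_left_mono Dexp h) auto
    also have "\<dots> = a powr (-\<alpha>) + (\<Sum>k<K. real h powr (-\<alpha>/\<beta>) * 2 powr ((real k + 1) * \<alpha>) * exp (-(\<kappa> * 2 powr (real k * \<beta>))))"
    proof (intro arg_cong2[where f="(+)"] refl sum.cong)
      fix k
      have h': "real h \<ge> 1" using h by simp
      show "(a / 2^(k+1)) powr (-\<alpha>) * exp (-(real h * \<kappa> * (a/2^k) powr (-\<beta>)))
          = real h powr (-\<alpha>/\<beta>) * 2 powr ((real k + 1) * \<alpha>) * exp (-(\<kappa> * 2 powr (real k * \<beta>)))"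
        unfolding pow_ident(1)[OF h' \<beta> a_def] pow_ident(2)[OF h' \<beta> a_def] ..
    qed
    also have "\<dots> = real h powr (-\<alpha>/\<beta>) * (1 + (\<Sum>k<K. 2 powr ((real k + 1) * \<alpha>) * exp (-(\<kappa> * 2 powr (real k * \<beta>)))))"
      using pow_ident(3)[OF _ \<beta> a_def] h by (simp add: algebra_simps sum_distrib_left)
    also have "\<dots> \<le> real h powr (-\<alpha>/\<beta>) * (1 + B0)"
      using B0[of K] by (intro mult_left_mono) auto
    finally show ?thesis unfolding D_def by (simp add: mult.commute)
  qed
  then show ?thesis by blast
qed


theorem proposition3p2:
  fixes M :: "'a measure"
    and X :: "nat \<Rightarrow> 'a \<Rightarrow> real"
    and \<sigma>X :: "nat \<Rightarrow> real"
    and \<xi> :: "nat \<Rightarrow> 'a \<Rightarrow> nat"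
    and T :: "nat \<Rightarrow> 'a \<Rightarrow> nat"
    and S :: "nat pmf"
    and c \<alpha> \<beta> :: real
  assumes P: "prob_space M"
    \<comment> \<open>X is a second-order stationary process with covariance function \<sigma>X\<close>
    and X_meas: "\<And>n. X n \<in> borel_measurable M"
    and X_L2: "\<And>n. integrable M (\<lambda>\<omega>. (X n \<omega>)\<^sup>2)"
    and X_mean: "\<And>n. (\<integral>\<omega>. X n \<omega> \<partial>M) = (\<integral>\<omega>. X 0 \<omega> \<partial>M)"
    and X_cov: "\<And>m h. cov M (X m) (X (m + h)) = \<sigma>X h"
    \<comment> \<open>covariance decay\<close>
    and c_pos: "c > 0" and \<alpha>: "0 < \<alpha>" "\<alpha> < 1"
    and decay: "\<And>h. h \<ge> 1 \<Longrightarrow> \<bar>\<sigma>X h\<bar> \<le> c * real h powr (- \<alpha>)"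
    \<comment> \<open>i.i.d. increments with law S on {1,2,...}\<close>
    and S_pos: "0 \<notin> set_pmf S"
    and \<xi>_iid: "prob_space.indep_vars M (\<lambda>_. count_space UNIV) \<xi> UNIV"
    and \<xi>_law: "\<And>i. distr M (count_space UNIV) (\<xi> i) = measure_pmf S"
    \<comment> \<open>random walk T with T 0 = 0\<close>
    and T_def: "\<And>n \<omega>. T n \<omega> = (\<Sum>i<n. \<xi> i \<omega>)"
    \<comment> \<open>independence of the walk and the process X\<close>
    and indep: "prob_space.indep_var M
        (Pi\<^sub>M UNIV (\<lambda>_. borel)) (\<lambda>\<omega> n. X n \<omega>)
        (Pi\<^sub>M UNIV (\<lambda>_. borel)) (\<lambda>\<omega> n. real (\<xi> n \<omega>))"
    \<comment> \<open>tail condition\<close>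
    and \<beta>: "0 < \<beta>" "\<beta> < 1"
    and tail: "Liminf at_top (\<lambda>x::real. ereal (x powr \<beta> * measure M {\<omega>\<in>space M. real (T 1 \<omega>) > x})) > 0"
  shows "\<exists>C. \<forall>n h. h \<ge> 1 \<longrightarrow>
           \<bar>cov M (\<lambda>\<omega>. X (T n \<omega>) \<omega>) (\<lambda>\<omega>. X (T (n + h) \<omega>) \<omega>)\<bar> \<le> C * real h powr (- \<alpha> / \<beta>)"
proof -
  interpret prob_space M by (rule P)
  have rv[measurable]: "\<And>i. \<xi> i \<in> measurable M (count_space UNIV)"
    using \<xi>_iid unfolding indep_vars_def2 by auto
  define \<mu> where "\<mu> = (\<integral>\<omega>. X 0 \<omega> \<partial>M)"
  have Xm: "\<And>n. (\<integral>\<omega>. X n \<omega> \<partial>M) = \<mu>" unfolding \<mu>_def by (rule X_mean)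
  note XF = X_facts[OF P X_meas X_L2 Xm X_cov]
  define PB where "PB = (Pi\<^sub>M UNIV (\<lambda>_::nat. (borel :: real measure)))"
  define Xv where "Xv = (\<lambda>\<omega> n. X n \<omega>)"
  define Zv where "Zv = (\<lambda>\<omega> n. real (\<xi> n \<omega>))"
  have ind: "indep_var PB Xv PB Zv" using indep unfolding PB_def Xv_def Zv_def .
  have Xvm[measurable]: "Xv \<in> measurable M PB" by (rule indep_var_rv1[OF ind])
  have Zvm[measurable]: "Zv \<in> measurable M PB" by (rule indep_var_rv2[OF ind])
  define tt where "tt z m = nat \<lfloor>\<Sum>i<m. z i\<rfloor>" for z :: "nat \<Rightarrow> real" and m
  have ttm[measurable]: "(\<lambda>z. tt z m) \<in> measurable PB (count_space UNIV)" for m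
    unfolding tt_def PB_def by measurable
  have ttZ: "tt (Zv \<omega>) m = T m \<omega>" for \<omega> m
  proof -
    have "(\<Sum>i<m. Zv \<omega> i) = real (T m \<omega>)" unfolding Zv_def T_def by simp
    then show ?thesis unfolding tt_def by simp
  qed
  have compm: "(\<lambda>p. fst p (g p)) \<in> borel_measurable (PB \<Otimes>\<^sub>M PB)"
    if g: "g \<in> measurable (PB \<Otimes>\<^sub>M PB) (count_space UNIV)" for g :: "(nat \<Rightarrow> real) \<times> (nat \<Rightarrow> real) \<Rightarrow> nat"
  proof (rule measurable_compose_countable[where f="\<lambda>i p. fst p i", OF _ g])
    fix i :: nat show "(\<lambda>p. fst p i) \<in> borel_measurable (PB \<Otimes>\<^sub>M PB)" unfolding PB_def by measurable
  qed
  have ttm2[measurable]: "(\<lambda>p. tt (snd p) m) \<in> measurable (PB \<Otimes>\<^sub>M PB) (count_space UNIV)" for m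
    by measurable
  have nnX: "(\<integral>\<^sup>+x. ennreal (norm (F x)) \<partial>distr M PB Xv) = ennreal (\<integral>\<omega>. \<bar>F (Xv \<omega>)\<bar> \<partial>M)"
    if F: "F \<in> borel_measurable PB" and Fi: "integrable M (\<lambda>\<omega>. F (Xv \<omega>))" for F :: "(nat \<Rightarrow> real) \<Rightarrow> real"
  proof -
    have "(\<integral>\<^sup>+x. ennreal (norm (F x)) \<partial>distr M PB Xv) = (\<integral>\<^sup>+\<omega>. ennreal (norm (F (Xv \<omega>))) \<partial>M)"
      using F by (intro nn_integral_distr) auto
    also have "\<dots> = ennreal (\<integral>\<omega>. \<bar>F (Xv \<omega>)\<bar> \<partial>M)"
      unfolding real_norm_def by (rule nn_integral_eq_integral) (use Fi in auto)
    finally show ?thesis .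
  qed
  have intX: "(\<integral>x. F x \<partial>distr M PB Xv) = (\<integral>\<omega>. F (Xv \<omega>) \<partial>M)"
    if F: "F \<in> borel_measurable PB" for F :: "(nat \<Rightarrow> real) \<Rightarrow> real"
    by (rule Bochner_Integration.integral_distr[OF Xvm F])
  have EY: "(\<integral>\<omega>. X (T n \<omega>) \<omega> \<partial>M) = \<mu>" and IY: "integrable M (\<lambda>\<omega>. X (T n \<omega>) \<omega>)" for n
  proof -
    define G where "G p = fst p (tt (snd p) n)" for p :: "(nat \<Rightarrow> real) \<times> (nat \<Rightarrow> real)"
    have Gm: "G \<in> borel_measurable (PB \<Otimes>\<^sub>M PB)" unfolding G_def by (rule compm) measurable
    have bnd: "(\<integral>\<^sup>+x. ennreal (norm (G (x,z))) \<partial>distr M PB Xv) \<le> ennreal (1 + \<bar>\<mu>\<bar> + \<sigma>X 0)" for z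
    proof -
      have "(\<integral>\<^sup>+x. ennreal (norm (G (x,z))) \<partial>distr M PB Xv) = ennreal (\<integral>\<omega>. \<bar>X (tt z n) \<omega>\<bar> \<partial>M)"
        unfolding G_def fst_conv snd_conv
        by (subst nnX) (auto simp: Xv_def PB_def XF(1))
      also have "\<dots> \<le> ennreal (1 + \<bar>\<mu>\<bar> + \<sigma>X 0)" by (intro ennreal_leI XF(6))
      finally show ?thesis .
    qed
    note TR = indep_transfer[OF P ind Gm bnd]
    have eqY: "(\<lambda>\<omega>. X (T n \<omega>) \<omega>) = (\<lambda>\<omega>. G (Xv \<omega>, Zv \<omega>))"
      unfolding G_def by (simp add: ttZ Xv_def)
    show "integrable M (\<lambda>\<omega>. X (T n \<omega>) \<omega>)" unfolding eqY by (rule TR(1))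
    have "(\<integral>\<omega>. X (T n \<omega>) \<omega> \<partial>M) = (\<integral>z. (\<integral>x. G (x,z) \<partial>distr M PB Xv) \<partial>distr M PB Zv)"
      unfolding eqY by (rule TR(2))
    also have "\<dots> = (\<integral>z. \<mu> \<partial>distr M PB Zv)"
    proof (rule Bochner_Integration.integral_cong[OF refl])
      fix z
      have "(\<integral>x. G (x,z) \<partial>distr M PB Xv) = (\<integral>\<omega>. X (tt z n) \<omega> \<partial>M)"
        unfolding G_def fst_conv snd_conv by (subst intX) (auto simp: Xv_def PB_def)
      then show "(\<integral>x. G (x,z) \<partial>distr M PB Xv) = \<mu>" using Xm by simp
    qed
    also have "\<dots> = \<mu>"
    proof -
      interpret PZ: prob_space "distr M PB Zv" by (rule prob_space_distr) simp
      show ?thesis using PZ.prob_space by simp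
    qed
    finally show "(\<integral>\<omega>. X (T n \<omega>) \<omega> \<partial>M) = \<mu>" .
  qed
  have covY: "cov M (\<lambda>\<omega>. X (T n \<omega>) \<omega>) (\<lambda>\<omega>. X (T m \<omega>) \<omega>) = (\<integral>\<omega>. cov M (X (T n \<omega>)) (X (T m \<omega>)) \<partial>M)" for n m
  proof -
    define G where "G p = (fst p (tt (snd p) n) - \<mu>) * (fst p (tt (snd p) m) - \<mu>)" for p :: "(nat \<Rightarrow> real) \<times> (nat \<Rightarrow> real)"
    have Gm: "G \<in> borel_measurable (PB \<Otimes>\<^sub>M PB)" unfolding G_def
      using compm[OF ttm2[of n]] compm[OF ttm2[of m]] by measurable
    have bnd: "(\<integral>\<^sup>+x. ennreal (norm (G (x,z))) \<partial>distr M PB Xv) \<le> ennreal (2 * \<sigma>X 0)" for z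
    proof -
      have "(\<integral>\<^sup>+x. ennreal (norm (G (x,z))) \<partial>distr M PB Xv) = ennreal (\<integral>\<omega>. \<bar>(X (tt z n) \<omega> - \<mu>) * (X (tt z m) \<omega> - \<mu>)\<bar> \<partial>M)"
        unfolding G_def fst_conv snd_conv
        by (subst nnX) (auto simp: Xv_def PB_def XF(4))
      also have "\<dots> \<le> ennreal (2 * \<sigma>X 0)" by (intro ennreal_leI XF(7))
      finally show ?thesis .
    qed
    note TR = indep_transfer[OF P ind Gm bnd]
    have eqY: "(\<lambda>\<omega>. (X (T n \<omega>) \<omega> - \<mu>) * (X (T m \<omega>) \<omega> - \<mu>)) = (\<lambda>\<omega>. G (Xv \<omega>, Zv \<omega>))"
      unfolding G_def by (simp add: ttZ Xv_def)
    have "cov M (\<lambda>\<omega>. X (T n \<omega>) \<omega>) (\<lambda>\<omega>. X (T m \<omega>) \<omega>) = (\<integral>\<omega>. G (Xv \<omega>, Zv \<omega>) \<partial>M)"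
      unfolding cov_def EY eqY ..
    also have "\<dots> = (\<integral>z. (\<integral>x. G (x,z) \<partial>distr M PB Xv) \<partial>distr M PB Zv)" by (rule TR(2))
    also have "\<dots> = (\<integral>z. cov M (X (tt z n)) (X (tt z m)) \<partial>distr M PB Zv)"
    proof (rule Bochner_Integration.integral_cong[OF refl])
      fix z
      have "(\<integral>x. G (x,z) \<partial>distr M PB Xv) = (\<integral>\<omega>. (X (tt z n) \<omega> - \<mu>) * (X (tt z m) \<omega> - \<mu>) \<partial>M)"
        unfolding G_def fst_conv snd_conv by (subst intX) (auto simp: Xv_def PB_def)
      then show "(\<integral>x. G (x,z) \<partial>distr M PB Xv) = cov M (X (tt z n)) (X (tt z m))" using XF(5) by simp
    qed
    also have "\<dots> = (\<integral>\<omega>. cov M (X (tt (Zv \<omega>) n)) (X (tt (Zv \<omega>) m)) \<partial>M)"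
    proof (rule Bochner_Integration.integral_distr[OF Zvm])
      show "(\<lambda>z. cov M (X (tt z n)) (X (tt z m))) \<in> borel_measurable PB"
      proof (rule measurable_compose_countable[where f="\<lambda>i z. cov M (X i) (X (tt z m))", OF _ ttm])
        fix i show "(\<lambda>z. cov M (X i) (X (tt z m))) \<in> borel_measurable PB"
          by (rule measurable_compose_countable[where f="\<lambda>j z. cov M (X i) (X j)", OF _ ttm]) simp
      qed
    qed
    finally show ?thesis by (simp add: ttZ)
  qed
  have tail': "Liminf at_top (\<lambda>x::real. ereal (x powr \<beta> * measure M {\<omega>\<in>space M. real (\<xi> 0 \<omega>) > x})) > 0"
    using tail by (simp add: T_def)
  obtain B where B: "\<And>n h. h \<ge> 1 \<Longrightarrow> (\<integral>\<omega>. real (\<Sum>i\<in>{n..<n+h}. \<xi> i \<omega>) powr (-\<alpha>) \<partial>M) \<le> B * real h powr (-\<alpha>/\<beta>)"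
    using walk_bound[OF P S_pos \<xi>_iid \<xi>_law \<alpha>(1) \<beta>(1) tail'] by blast
  have AEpos: "AE \<omega> in M. \<forall>i. 1 \<le> \<xi> i \<omega>"
  proof (subst AE_all_countable, intro allI)
    fix i
    have "AE k in distr M (count_space UNIV) (\<xi> i). 1 \<le> k"
      unfolding \<xi>_law using S_pos by (auto simp: AE_measure_pmf_iff Suc_le_eq intro!: gr0I)
    then show "AE \<omega> in M. 1 \<le> \<xi> i \<omega>"
      by (subst (asm) AE_distr_iff) auto
  qed
  have "\<bar>cov M (\<lambda>\<omega>. X (T n \<omega>) \<omega>) (\<lambda>\<omega>. X (T (n + h) \<omega>) \<omega>)\<bar> \<le> (c * B) * real h powr (- \<alpha> / \<beta>)"
    if h: "h \<ge> 1" for n h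
  proof -
    define D where "D \<omega> = (\<Sum>i\<in>{n..<n+h}. \<xi> i \<omega>)" for \<omega>
    have Dm[measurable]: "D \<in> measurable M (count_space UNIV)" unfolding D_def by measurable
    have TD: "T (n + h) \<omega> = T n \<omega> + D \<omega>" for \<omega>
    proof -
      have e: "{..<n+h} = {..<n} \<union> {n..<n+h}" by auto
      have "(\<Sum>i\<in>{..<n} \<union> {n..<n+h}. \<xi> i \<omega>) = (\<Sum>i<n. \<xi> i \<omega>) + (\<Sum>i\<in>{n..<n+h}. \<xi> i \<omega>)"
        by (rule sum.union_disjoint) auto
      then show ?thesis unfolding T_def D_def e .
    qed
    have cv: "cov M (X (T n \<omega>)) (X (T (n+h) \<omega>)) = \<sigma>X (D \<omega>)" for \<omega>
      unfolding TD by (rule X_cov)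
    have sig_int: "integrable M (\<lambda>\<omega>. \<sigma>X (D \<omega>))"
    proof (rule integrable_const_bound[where B="\<bar>\<sigma>X 0\<bar> + c"])
      show "AE \<omega> in M. norm (\<sigma>X (D \<omega>)) \<le> \<bar>\<sigma>X 0\<bar> + c"
      proof (rule AE_I2)
        fix \<omega> show "norm (\<sigma>X (D \<omega>)) \<le> \<bar>\<sigma>X 0\<bar> + c"
        proof (cases "D \<omega> = 0")
          case False
          then have "1 \<le> D \<omega>" by simp
          then have "\<bar>\<sigma>X (D \<omega>)\<bar> \<le> c * real (D \<omega>) powr (-\<alpha>)" by (rule decay)
          also have "\<dots> \<le> c * 1" using \<open>1 \<le> D \<omega>\<close> \<alpha> c_pos
            by (intro mult_left_mono powr_neg_le1) auto
          finally show ?thesis by simp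
        qed (use c_pos in simp)
      qed
      show "(\<lambda>\<omega>. \<sigma>X (D \<omega>)) \<in> borel_measurable M"
        by (rule measurable_compose_countable[where f="\<lambda>i \<omega>. \<sigma>X i", OF _ Dm]) simp
    qed
    have pw_int: "integrable M (\<lambda>\<omega>. c * real (D \<omega>) powr (-\<alpha>))"
    proof (rule integrable_const_bound[where B="c"])
      show "AE \<omega> in M. norm (c * real (D \<omega>) powr (-\<alpha>)) \<le> c"
      proof (rule AE_I2)
        fix \<omega> show "norm (c * real (D \<omega>) powr (-\<alpha>)) \<le> c"
        proof (cases "D \<omega> = 0")
          case False
          then have "1 \<le> real (D \<omega>)" by simp
          then have "real (D \<omega>) powr (-\<alpha>) \<le> 1" using \<alpha> by (intro powr_neg_le1) auto
          then show ?thesis using c_pos by (simp add: abs_mult mult_left_le)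
        qed (use c_pos in simp)
      qed
    qed measurable
    have "cov M (\<lambda>\<omega>. X (T n \<omega>) \<omega>) (\<lambda>\<omega>. X (T (n + h) \<omega>) \<omega>) = (\<integral>\<omega>. \<sigma>X (D \<omega>) \<partial>M)"
      unfolding covY cv ..
    then have "\<bar>cov M (\<lambda>\<omega>. X (T n \<omega>) \<omega>) (\<lambda>\<omega>. X (T (n + h) \<omega>) \<omega>)\<bar> \<le> (\<integral>\<omega>. \<bar>\<sigma>X (D \<omega>)\<bar> \<partial>M)"
      by simp
    also have "\<dots> \<le> (\<integral>\<omega>. c * real (D \<omega>) powr (-\<alpha>) \<partial>M)"
    proof (rule integral_mono_AE)
      show "integrable M (\<lambda>\<omega>. \<bar>\<sigma>X (D \<omega>)\<bar>)" using sig_int by auto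
      show "integrable M (\<lambda>\<omega>. c * real (D \<omega>) powr (-\<alpha>))" by (rule pw_int)
      show "AE \<omega> in M. \<bar>\<sigma>X (D \<omega>)\<bar> \<le> c * real (D \<omega>) powr (-\<alpha>)"
        using AEpos
      proof eventually_elim
        case (elim \<omega>)
        have "\<xi> n \<omega> \<le> D \<omega>" unfolding D_def by (rule member_le_sum) (use h in auto)
        with elim[rule_format, of n] have "1 \<le> D \<omega>" by linarith
        then show ?case by (rule decay)
      qed
    qed
    also have "\<dots> = c * (\<integral>\<omega>. real (\<Sum>i\<in>{n..<n+h}. \<xi> i \<omega>) powr (-\<alpha>) \<partial>M)"
      unfolding D_def by simp
    also have "\<dots> \<le> c * (B * real h powr (-\<alpha>/\<beta>))"
      using B[OF h, of n] c_pos by (intro mult_left_mono) auto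
    finally show ?thesis by (simp add: mult.assoc)
  qed
  then show ?thesis by blast
qed

end
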